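(* If $G_1$ and $G_2$ are vertex-disjoint triangle graphs, then their disjoint union $G_1+G_2$ and their join $G_1*G_2$ are also triangle graphs.
   Context: A graph $G$ is triangle if for every maximal stable set $S$ of $G$ and every edge $uv$ of $G$ with $u,v\notin S$, there is $s\in S$ adjacent to both $u$ and $v$. The join $G_1*G_2$ is obtained from $G_1+G_2$ by adding all edges between $V(G_1)$ and $V(G_2)$. *)

theory Defs
  imports Main
begin

definition graph :: "'a set \<Rightarrow> 'a set set \<Rightarrow> bool" where
  "graph V E \<longleftrightarrow> finite V \<and> (\<forall>e\<in>E. e \<subseteq> V \<and> card e = 2)"

definition stable_set :: "'a set \<Rightarrow> 'a set set \<Rightarrow> 'a set \<Rightarrow> bool" where
  "stable_set V E S \<longleftrightarrow> S \<subseteq> V \<and> (\<forall>u\<in>S. \<forall>v\<in>S. {u, v} \<notin> E)"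

definition maximal_stable_set :: "'a set \<Rightarrow> 'a set set \<Rightarrow> 'a set \<Rightarrow> bool" where
  "maximal_stable_set V E S \<longleftrightarrow>
     stable_set V E S \<and> (\<forall>T. stable_set V E T \<and> S \<subseteq> T \<longrightarrow> T = S)"

definition triangle_graph :: "'a set \<Rightarrow> 'a set set \<Rightarrow> bool" where
  "triangle_graph V E \<longleftrightarrow>
     (\<forall>S. maximal_stable_set V E S \<longrightarrow>
        (\<forall>u v. {u, v} \<in> E \<and> u \<notin> S \<and> v \<notin> S \<longrightarrow>
           (\<exists>s\<in>S. {s, u} \<in> E \<and> {s, v} \<in> E)))"

text \<open>Disjoint union G1 + G2 and join G1 * G2 (edge sets; vertex set is V1 \<union> V2).\<close>

definition union_edges :: "'a set set \<Rightarrow> 'a set set \<Rightarrow> 'a set set" where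
  "union_edges E1 E2 = E1 \<union> E2"

definition join_edges :: "'a set \<Rightarrow> 'a set set \<Rightarrow> 'a set \<Rightarrow> 'a set set \<Rightarrow> 'a set set" where
  "join_edges V1 E1 V2 E2 = E1 \<union> E2 \<union> {{a, b} | a b. a \<in> V1 \<and> b \<in> V2}"

end

theory Submission
  imports Defs
begin

lemma edge_in: "graph V E \<Longrightarrow> {u,v} \<in> E \<Longrightarrow> u \<in> V \<and> v \<in> V \<and> u \<noteq> v"
proof -
  assume g: "graph V E" and e: "{u,v} \<in> E"
  have "{u,v} \<subseteq> V" "card {u,v} = 2" using g e unfolding graph_def by auto
  moreover have "u \<noteq> v" using \<open>card {u,v} = 2\<close> by (cases "u = v") auto
  ultimately show ?thesis by auto
qed

lemma join_sym: "join_edges V1 E1 V2 E2 = join_edges V2 E2 V1 E1"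
  unfolding join_edges_def by (auto simp: insert_commute)

lemma join_graph:
  assumes "graph V1 E1" "graph V2 E2" "V1 \<inter> V2 = {}"
  shows "graph (V1 \<union> V2) (join_edges V1 E1 V2 E2)"
  using assms unfolding graph_def join_edges_def by (auto simp: card_insert_if)

lemma union_graph:
  assumes "graph V1 E1" "graph V2 E2"
  shows "graph (V1 \<union> V2) (union_edges E1 E2)"
  using assms unfolding graph_def union_edges_def by auto

lemma join_cross: "a \<in> V1 \<Longrightarrow> b \<in> V2 \<Longrightarrow> {a,b} \<in> join_edges V1 E1 V2 E2"
  unfolding join_edges_def by blast

lemma join_half:
  assumes g1: "graph V1 E1" and g2: "graph V2 E2" and d: "V1 \<inter> V2 = {}"
    and t1: "triangle_graph V1 E1"
    and m: "maximal_stable_set (V1 \<union> V2) (join_edges V1 E1 V2 E2) S"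
    and sub: "S \<subseteq> V1" and ne: "S \<noteq> {}"
    and e: "{u,v} \<in> join_edges V1 E1 V2 E2" and uS: "u \<notin> S" and vS: "v \<notin> S"
  shows "\<exists>s\<in>S. {s,u} \<in> join_edges V1 E1 V2 E2 \<and> {s,v} \<in> join_edges V1 E1 V2 E2"
proof -
  let ?J = "join_edges V1 E1 V2 E2"
  have inJ: "E1 \<subseteq> ?J" "E2 \<subseteq> ?J" unfolding join_edges_def by auto
  have stJ: "stable_set (V1 \<union> V2) ?J S" and maxJ: "\<And>T. stable_set (V1 \<union> V2) ?J T \<Longrightarrow> S \<subseteq> T \<Longrightarrow> T = S"
    using m unfolding maximal_stable_set_def by auto
  have E1J: "{x,y} \<in> E1" if "x \<in> V1" "y \<in> V1" "{x,y} \<in> ?J" for x y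
  proof -
    have "{x,y} \<notin> E2" using edge_in[OF g2] that d by blast
    moreover have "\<not> (\<exists>a b. {x,y} = {a,b} \<and> a \<in> V1 \<and> b \<in> V2)"
      using that d by (auto simp: doubleton_eq_iff)
    ultimately show ?thesis using that(3) unfolding join_edges_def by blast
  qed
  have st1: "stable_set V1 E1 S" using stJ sub inJ unfolding stable_set_def by blast
  have max1: "maximal_stable_set V1 E1 S"
    unfolding maximal_stable_set_def
  proof (intro conjI allI impI st1)
    fix T assume "stable_set V1 E1 T \<and> S \<subseteq> T"
    then have T: "stable_set V1 E1 T" "S \<subseteq> T" by auto
    have "stable_set (V1 \<union> V2) ?J T" using T(1) E1J unfolding stable_set_def by blast
    then show "T = S" using maxJ T(2) by blast
  qed
  have nb: "\<exists>s\<in>S. {s,x} \<in> E1" if "x \<in> V1" "x \<notin> S" for x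
  proof (rule ccontr)
    assume "\<not> ?thesis"
    have sx: "{x} \<notin> E1" using edge_in[OF g1, of x x] by auto
    with \<open>\<not> ?thesis\<close> have "stable_set V1 E1 (insert x S)" using st1 that edge_in[OF g1]
      unfolding stable_set_def by (auto simp: insert_commute dest: edge_in[OF g1])
    then show False using max1 that(2) unfolding maximal_stable_set_def by blast
  qed
  obtain s0 where s0: "s0 \<in> S" using ne by blast
  consider "{u,v} \<in> E1" | "{u,v} \<in> E2" | a b where "{u,v} = {a,b}" "a \<in> V1" "b \<in> V2"
    using e unfolding join_edges_def by blast
  then show ?thesis
  proof cases
    case 1
    then obtain s where "s \<in> S" "{s,u} \<in> E1" "{s,v} \<in> E1"
      using t1 max1 uS vS unfolding triangle_graph_def by blast
    then show ?thesis using inJ by blast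
  next
    case 2
    then have "u \<in> V2" "v \<in> V2" using edge_in[OF g2] by auto
    then show ?thesis using s0 sub join_cross[of s0 V1 _ V2 E1 E2] by blast
  next
    case 3
    then have "(u = a \<and> v = b) \<or> (u = b \<and> v = a)" by (auto simp: doubleton_eq_iff)
    then show ?thesis
    proof
      assume h: "u = a \<and> v = b"
      then obtain s where "s \<in> S" "{s,u} \<in> E1" using nb 3 uS by blast
      then show ?thesis using h 3 inJ sub join_cross[of s V1 v V2 E1 E2] by blast
    next
      assume h: "u = b \<and> v = a"
      then obtain s where "s \<in> S" "{s,v} \<in> E1" using nb 3 vS by blast
      then show ?thesis using h 3 inJ sub join_cross[of s V1 u V2 E1 E2] by blast
    qed
  qed
qed

lemma join_split:
  assumes g1: "graph V1 E1" and g2: "graph V2 E2" and d: "V1 \<inter> V2 = {}"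
    and m: "maximal_stable_set (V1 \<union> V2) (join_edges V1 E1 V2 E2) S"
    and ne: "V1 \<union> V2 \<noteq> {}"
  shows "S \<noteq> {} \<and> (S \<subseteq> V1 \<or> S \<subseteq> V2)"
proof -
  let ?J = "join_edges V1 E1 V2 E2"
  have st: "stable_set (V1 \<union> V2) ?J S" and mx: "\<And>T. stable_set (V1 \<union> V2) ?J T \<Longrightarrow> S \<subseteq> T \<Longrightarrow> T = S"
    using m unfolding maximal_stable_set_def by auto
  have self: "{x,x} \<notin> ?J" for x
  proof
    assume "{x,x} \<in> ?J"
    then show False unfolding join_edges_def using edge_in[OF g1, of x x] edge_in[OF g2, of x x] d
      by (auto simp: doubleton_eq_iff)
  qed
  have "S \<noteq> {}"
  proof
    assume "S = {}"
    obtain x where x: "x \<in> V1 \<union> V2" using ne by blast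
    have "stable_set (V1 \<union> V2) ?J {x}" using x self unfolding stable_set_def by auto
    then show False using mx \<open>S = {}\<close> by blast
  qed
  moreover have "S \<subseteq> V1 \<or> S \<subseteq> V2"
  proof (rule ccontr)
    assume "\<not> ?thesis"
    then obtain a b where "a \<in> S" "b \<in> S" "a \<notin> V1" "b \<notin> V2" by blast
    then have "a \<in> V2" "b \<in> V1" using st unfolding stable_set_def by auto
    then have "{b,a} \<in> ?J" by (intro join_cross)
    then show False using st \<open>a \<in> S\<close> \<open>b \<in> S\<close> unfolding stable_set_def by blast
  qed
  ultimately show ?thesis by blast
qed

lemma union_tri:
  assumes g1: "graph V1 E1" and g2: "graph V2 E2" and d: "V1 \<inter> V2 = {}"
    and t1: "triangle_graph V1 E1" and t2: "triangle_graph V2 E2"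
  shows "triangle_graph (V1 \<union> V2) (union_edges E1 E2)"
  unfolding triangle_graph_def
proof (intro allI impI)
  fix S u v
  let ?U = "union_edges E1 E2"
  assume m: "maximal_stable_set (V1 \<union> V2) ?U S" and e: "{u, v} \<in> ?U \<and> u \<notin> S \<and> v \<notin> S"
  have st: "stable_set (V1 \<union> V2) ?U S" and mx: "\<And>T. stable_set (V1 \<union> V2) ?U T \<Longrightarrow> S \<subseteq> T \<Longrightarrow> T = S"
    using m unfolding maximal_stable_set_def by auto
  have part: "maximal_stable_set Vi Ei (S \<inter> Vi)" if gi: "graph Vi Ei" and go: "graph Vo Eo"
     and dd: "Vi \<inter> Vo = {}" and VV: "V1 \<union> V2 = Vi \<union> Vo" and UU: "?U = Ei \<union> Eo" for Vi Ei Vo Eo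
    unfolding maximal_stable_set_def
  proof (intro conjI allI impI)
    show "stable_set Vi Ei (S \<inter> Vi)" using st UU unfolding stable_set_def by auto
    fix T assume "stable_set Vi Ei T \<and> S \<inter> Vi \<subseteq> T"
    then have T: "stable_set Vi Ei T" "S \<inter> Vi \<subseteq> T" by auto
    have "stable_set (V1 \<union> V2) ?U (T \<union> (S - Vi))"
      unfolding stable_set_def
    proof (intro conjI ballI)
      show "T \<union> (S - Vi) \<subseteq> V1 \<union> V2" using T st VV unfolding stable_set_def by auto
      fix x y assume x: "x \<in> T \<union> (S - Vi)" and y: "y \<in> T \<union> (S - Vi)"
      show "{x,y} \<notin> ?U"
      proof
        assume xy: "{x,y} \<in> ?U"
        show False
        proof (cases "x \<in> T")
          case xT: True
          show ?thesis
          proof (cases "y \<in> T")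
            case True
            then have "{x,y} \<notin> Ei" using T xT unfolding stable_set_def by auto
            moreover have "{x,y} \<notin> Eo" using edge_in[OF go, of x y] xT T dd unfolding stable_set_def by auto
            ultimately show False using xy UU by auto
          next
            case False
            then have "y \<in> S" "y \<notin> Vi" using y by auto
            then have "{x,y} \<notin> Ei" using edge_in[OF gi, of x y] by auto
            moreover have "{x,y} \<notin> Eo" using edge_in[OF go, of x y] xT T dd unfolding stable_set_def by auto
            ultimately show False using xy UU by auto
          qed
        next
          case xF: False
          then have xs: "x \<in> S" "x \<notin> Vi" using x by auto
          show ?thesis
          proof (cases "y \<in> T")
            case True
            then have "{x,y} \<notin> Ei" using edge_in[OF gi, of x y] xs by auto
            moreover have "{x,y} \<notin> Eo" using edge_in[OF go, of x y] True T dd unfolding stable_set_def by auto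
            ultimately show False using xy UU by auto
          next
            case False
            then have "y \<in> S" using y by auto
            then show False using xs st xy unfolding stable_set_def by auto
          qed
        qed
      qed
    qed
    moreover have "S \<subseteq> T \<union> (S - Vi)" using T by auto
    ultimately have eq: "T \<union> (S - Vi) = S" using mx by blast
    have "T \<subseteq> Vi" using T unfolding stable_set_def by auto
    then show "T = S \<inter> Vi" using eq by blast
  qed
  have m1: "maximal_stable_set V1 E1 (S \<inter> V1)"
    by (rule part[OF g1 g2 d]) (auto simp: union_edges_def)
  have m2: "maximal_stable_set V2 E2 (S \<inter> V2)"
    by (rule part[OF g2 g1]) (use d in \<open>auto simp: union_edges_def\<close>)
  have "{u,v} \<in> E1 \<or> {u,v} \<in> E2" using e unfolding union_edges_def by auto
  then show "\<exists>s\<in>S. {s, u} \<in> ?U \<and> {s, v} \<in> ?U"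
  proof
    assume "{u,v} \<in> E1"
    then obtain s where "s \<in> S \<inter> V1" "{s,u} \<in> E1" "{s,v} \<in> E1"
      using t1 m1 e unfolding triangle_graph_def by blast
    then show ?thesis unfolding union_edges_def by blast
  next
    assume "{u,v} \<in> E2"
    then obtain s where "s \<in> S \<inter> V2" "{s,u} \<in> E2" "{s,v} \<in> E2"
      using t2 m2 e unfolding triangle_graph_def by blast
    then show ?thesis unfolding union_edges_def by blast
  qed
qed

lemma join_tri:
  assumes g1: "graph V1 E1" and g2: "graph V2 E2" and d: "V1 \<inter> V2 = {}"
    and t1: "triangle_graph V1 E1" and t2: "triangle_graph V2 E2"
  shows "triangle_graph (V1 \<union> V2) (join_edges V1 E1 V2 E2)"
  unfolding triangle_graph_def
proof (intro allI impI)
  fix S u v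
  assume m: "maximal_stable_set (V1 \<union> V2) (join_edges V1 E1 V2 E2) S"
    and e: "{u, v} \<in> join_edges V1 E1 V2 E2 \<and> u \<notin> S \<and> v \<notin> S"
  have "V1 \<union> V2 \<noteq> {}" using e edge_in[OF join_graph[OF g1 g2 d]] by blast
  then have sp: "S \<noteq> {} \<and> (S \<subseteq> V1 \<or> S \<subseteq> V2)" using join_split[OF g1 g2 d m] by blast
  show "\<exists>s\<in>S. {s, u} \<in> join_edges V1 E1 V2 E2 \<and> {s, v} \<in> join_edges V1 E1 V2 E2"
  proof (cases "S \<subseteq> V1")
    case True
    then show ?thesis using join_half[OF g1 g2 d t1 m True] sp e by blast
  next
    case False
    then have S2: "S \<subseteq> V2" using sp by blast
    have d': "V2 \<inter> V1 = {}" using d by blast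
    have m': "maximal_stable_set (V2 \<union> V1) (join_edges V2 E2 V1 E1) S"
      using m by (simp add: join_sym Un_commute)
    show ?thesis using join_half[OF g2 g1 d' t2 m' S2] sp e by (simp add: join_sym)
  qed
qed

theorem proposition5:
  assumes "graph V1 E1" and "graph V2 E2"
    and "V1 \<inter> V2 = {}"
    and "triangle_graph V1 E1" and "triangle_graph V2 E2"
  shows "graph (V1 \<union> V2) (union_edges E1 E2)
         \<and> triangle_graph (V1 \<union> V2) (union_edges E1 E2)
         \<and> graph (V1 \<union> V2) (join_edges V1 E1 V2 E2)
         \<and> triangle_graph (V1 \<union> V2) (join_edges V1 E1 V2 E2)"
  using union_graph[OF assms(1,2)] union_tri[OF assms] join_graph[OF assms(1-3)] join_tri[OF assms]
  by blast

end
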